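(* Let $(\mathcal U,\mathcal F)$ be a strongly accessible set system and $S$ a nonempty maximal solution with canonical order $s_1,\dots,s_{|S|}$. Let $j$ be the smallest index such that $\mathrm{complete}(S[j])=S$, and suppose $j>1$. Put $\mathrm{pi}(S)=s_j$, $\mathrm{core}(S)=S[j-1]$, $\mathrm{parent}(S)=\mathrm{complete}(\mathrm{core}(S))$. Then $\mathrm{parent}(S)$ is a maximal solution with $\mathrm{parent}(S)\prec S$ (in particular $\mathrm{parent}(S)\neq S$), $\mathrm{core}(S)\subseteq \mathrm{parent}(S)$, $\mathrm{pi}(S)\notin\mathrm{core}(S)$, $\mathrm{core}(S)\cup\{\mathrm{pi}(S)\}\in\mathcal F$, and $S=\mathrm{complete}(\mathrm{core}(S)\cup\{\mathrm{pi}(S)\})$.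
   Context: A set system is a pair $(\mathcal U,\mathcal F)$ with $\mathcal U$ finite, $\mathcal F\subseteq 2^{\mathcal U}$, $\emptyset\in\mathcal F$; $S\in\mathcal F$ is maximal if there is no $Y\in\mathcal F$ with $S\subsetneq Y$. Strongly accessible: for all $X,Y\in\mathcal F$ with $X\subsetneq Y$ there is $z\in Y\setminus X$ with $X\cup\{z\}\in\mathcal F$. Elements of $\mathcal U$ are identified with distinct integers. For $X,A\subseteq\mathcal U$, $X^+_A=\{a\in A\setminus X: X\cup\{a\}\in\mathcal F\}$. $Z=\{x\in\mathcal U:\{x\}\in\mathcal F\}$, $\mathrm{source}(X)=\min(X\cap Z)$. For $X\in\mathcal F$ and $A\subseteq\mathcal U$, $\mathrm{complete}(X,A)$ is obtained by repeatedly replacing $X$ with $X\cup\{\min X^+_A\}$ while $X^+_A\neq\emptyset$, then returning $X$; $\mathrm{complete}(X)=\mathrm{complete}(X,\mathcal U)$. The canonical order of a nonempty maximal solution $S$ is $s_1=\mathrm{source}(S)$ and $s_{i+1}=\min S[i]^+_S$ while this set is nonempty, with $S[i]=\{s_1,\dots,s_i\}$. For maximal solutions $S\ne T$ with canonical orders $(s_i)$, $(t_i)$, let $i$ be the smallest index with $s_i\neq t_i$; $S\prec T$ iff $s_i<t_i$. *)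

theory Defs
  imports Main
begin

definition set_system :: "int set \<Rightarrow> int set set \<Rightarrow> bool" where
  "set_system U F \<longleftrightarrow> finite U \<and> F \<subseteq> Pow U \<and> {} \<in> F"

definition strongly_accessible :: "int set set \<Rightarrow> bool" where
  "strongly_accessible F \<longleftrightarrow>
     (\<forall>X\<in>F. \<forall>Y\<in>F. X \<subset> Y \<longrightarrow> (\<exists>z\<in>Y - X. insert z X \<in> F))"

definition maximal :: "int set set \<Rightarrow> int set \<Rightarrow> bool" where
  "maximal F S \<longleftrightarrow> S \<in> F \<and> \<not> (\<exists>Y\<in>F. S \<subset> Y)"

definition ext :: "int set set \<Rightarrow> int set \<Rightarrow> int set \<Rightarrow> int set" where
  "ext F X A = {a \<in> A - X. insert a X \<in> F}"

definition singletons :: "int set set \<Rightarrow> int set \<Rightarrow> int set" where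
  "singletons F U = {x \<in> U. {x} \<in> F}"

definition source :: "int set set \<Rightarrow> int set \<Rightarrow> int set \<Rightarrow> int" where
  "source F U X = Min (X \<inter> singletons F U)"

function complete_on :: "int set set \<Rightarrow> int set \<Rightarrow> int set \<Rightarrow> int set" where
  "complete_on F A X =
     (if \<not> finite A \<or> ext F X A = {} then X
      else complete_on F A (insert (Min (ext F X A)) X))"
  by pat_completeness auto
termination
proof (relation "measure (\<lambda>(F, A, X). card (A - X))")
  show "wf (measure (\<lambda>(F, A, X). card (A - X)))" by simp
next
  fix F A X
  assume h: "\<not> (\<not> finite A \<or> ext F X A = {})"
  then have fin: "finite A" and ne: "ext F X A \<noteq> {}" by auto
  have "finite (ext F X A)" using fin unfolding ext_def by auto
  then have m: "Min (ext F X A) \<in> ext F X A" using ne by simp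
  then have "Min (ext F X A) \<in> A - X" unfolding ext_def by auto
  then have "card (A - insert (Min (ext F X A)) X) < card (A - X)"
    using fin by (metis Diff_insert card_Diff1_less finite_Diff)
  then show "((F, A, insert (Min (ext F X A)) X), F, A, X)
             \<in> measure (\<lambda>(F, A, X). card (A - X))" by simp
qed

declare complete_on.simps [simp del]

definition complete :: "int set set \<Rightarrow> int set \<Rightarrow> int set \<Rightarrow> int set" where
  "complete F U X = complete_on F U X"

text \<open>Canonical order of S: s_1 = source(S) = min (S[0])^+_S (since S[0] = {}),
  s_{i+1} = min S[i]^+_S while nonempty.  Built as a list by iteration.\<close>
fun canon_seq :: "int set set \<Rightarrow> int set \<Rightarrow> nat \<Rightarrow> int list" where
  "canon_seq F S 0 = []"
| "canon_seq F S (Suc i) =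
     (let L = canon_seq F S i; C = ext F (set L) S
      in if C = {} then L else L @ [Min C])"

definition canon :: "int set set \<Rightarrow> int set \<Rightarrow> int list" where
  "canon F S = canon_seq F S (card S)"

definition prefix_set :: "int set set \<Rightarrow> int set \<Rightarrow> nat \<Rightarrow> int set" where
  "prefix_set F S i = set (take i (canon F S))"

definition prec :: "int set set \<Rightarrow> int set \<Rightarrow> int set \<Rightarrow> bool" where
  "prec F S T \<longleftrightarrow> S \<noteq> T \<and>
     (\<exists>i. i < length (canon F S) \<and> i < length (canon F T) \<and>
          take i (canon F S) = take i (canon F T) \<and> canon F S ! i < canon F T ! i)"

end

theory Submission
  imports Defs
begin

lemma complete_on_props:
  assumes "finite A"
  shows "ext F (complete_on F A X) A = {} \<and> X \<subseteq> complete_on F A X \<and>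
         (X \<in> F \<longrightarrow> complete_on F A X \<in> F)"
  using assms
proof (induction F A X rule: complete_on.induct)
  case (1 F A X)
  show ?case
  proof (cases "ext F X A = {}")
    case True
    then show ?thesis using 1(2) by (simp add: complete_on.simps)
  next
    case False
    have fin: "finite (ext F X A)" using 1(2) unfolding ext_def by auto
    then have m: "Min (ext F X A) \<in> ext F X A" using False by simp
    have eq: "complete_on F A X = complete_on F A (insert (Min (ext F X A)) X)"
      using False 1(2) by (simp add: complete_on.simps)
    note IH = 1(1)[OF _ 1(2)]
    from IH False 1(2) m show ?thesis unfolding eq by (auto simp: ext_def)
  qed
qed

lemma complete_maximal:
  assumes "set_system U F" "strongly_accessible F" "X \<in> F"
  shows "maximal F (complete F U X) \<and> X \<subseteq> complete F U X"
proof -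
  have fin: "finite U" and sub: "F \<subseteq> Pow U" using assms(1) by (auto simp: set_system_def)
  let ?R = "complete F U X"
  have P: "ext F ?R U = {}" "X \<subseteq> ?R" "?R \<in> F"
    using complete_on_props[OF fin, of F X] assms(3) by (auto simp: complete_def)
  have "\<not> (\<exists>Y\<in>F. ?R \<subset> Y)"
  proof
    assume "\<exists>Y\<in>F. ?R \<subset> Y"
    then obtain Y where Y: "Y \<in> F" "?R \<subset> Y" by blast
    then obtain z where "z \<in> Y - ?R" "insert z ?R \<in> F"
      using assms(2) P(3) unfolding strongly_accessible_def by blast
    moreover have "z \<in> U" using Y sub \<open>z \<in> Y - ?R\<close> by auto
    ultimately show False using P(1) by (auto simp: ext_def)
  qed
  then show ?thesis using P by (simp add: maximal_def)
qed

lemma canon_seq_props: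
  assumes "strongly_accessible F" "T \<in> F" "finite T" "{} \<in> F"
  shows "i \<le> card T \<Longrightarrow> length (canon_seq F T i) = i \<and> distinct (canon_seq F T i) \<and>
         set (canon_seq F T i) \<subseteq> T \<and> set (canon_seq F T i) \<in> F"
proof (induction i)
  case 0
  then show ?case using assms by simp
next
  case (Suc i)
  define L where "L = canon_seq F T i"
  define C where "C = ext F (set L) T"
  have IH: "length L = i" "distinct L" "set L \<subseteq> T" "set L \<in> F"
    using Suc L_def by auto
  have "card (set L) = i" using IH distinct_card by metis
  then have "set L \<subset> T" using IH(3) Suc(2) by auto
  then obtain z where "z \<in> T - set L" "insert z (set L) \<in> F"
    using assms(1,2) IH(4) unfolding strongly_accessible_def by blast
  then have Cne: "C \<noteq> {}" unfolding C_def ext_def by auto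
  have "finite C" using assms(3) unfolding C_def ext_def by auto
  then have "Min C \<in> C" using Cne by simp
  then have M: "Min C \<in> T" "Min C \<notin> set L" "insert (Min C) (set L) \<in> F"
    unfolding C_def ext_def by auto
  have "canon_seq F T (Suc i) = L @ [Min C]"
    using Cne by (simp add: L_def C_def Let_def)
  then show ?case using IH M by auto
qed

lemma canon_seq_ext: "\<exists>ys. canon_seq F T (i + d) = canon_seq F T i @ ys"
proof (induction d)
  case 0 then show ?case by simp
next
  case (Suc d)
  then obtain ys where "canon_seq F T (i + d) = canon_seq F T i @ ys" by blast
  then show ?case by (auto simp: Let_def)
qed

lemma canon_take:
  assumes "strongly_accessible F" "T \<in> F" "finite T" "{} \<in> F" "i \<le> card T"
  shows "take i (canon F T) = canon_seq F T i"
proof -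
  obtain ys where "canon_seq F T (i + (card T - i)) = canon_seq F T i @ ys"
    using canon_seq_ext by blast
  then have "canon F T = canon_seq F T i @ ys" using assms(5) by (simp add: canon_def)
  then show ?thesis using canon_seq_props[OF assms(1-4) assms(5)] by simp
qed

lemma canon_nth:
  assumes "strongly_accessible F" "T \<in> F" "finite T" "{} \<in> F" "i < card T"
  shows "ext F (set (canon_seq F T i)) T \<noteq> {} \<and>
         canon F T ! i = Min (ext F (set (canon_seq F T i)) T)"
proof -
  have A: "length (canon_seq F T (Suc i)) = Suc i"
    using canon_seq_props[OF assms(1-4), of "Suc i"] assms(5) by simp
  have B: "length (canon_seq F T i) = i"
    using canon_seq_props[OF assms(1-4), of i] assms(5) by simp
  have ne: "ext F (set (canon_seq F T i)) T \<noteq> {}"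
  proof
    assume "ext F (set (canon_seq F T i)) T = {}"
    then have "canon_seq F T (Suc i) = canon_seq F T i" by (simp add: Let_def)
    then show False using A B by simp
  qed
  then have E: "canon_seq F T (Suc i) = canon_seq F T i @ [Min (ext F (set (canon_seq F T i)) T)]"
    by (simp add: Let_def)
  have "canon F T ! i = take (Suc i) (canon F T) ! i" by simp
  also have "\<dots> = canon_seq F T (Suc i) ! i" using canon_take[OF assms(1-4), of "Suc i"] assms(5) by simp
  also have "\<dots> = Min (ext F (set (canon_seq F T i)) T)" using E B by (simp add: nth_append)
  finally show ?thesis using ne by simp
qed

theorem mainTheorem4:
  fixes U :: "int set" and F :: "int set set" and S :: "int set" and j :: nat
  assumes "set_system U F" and "strongly_accessible F"
    and "maximal F S" and "S \<noteq> {}"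
    and "j \<in> {1..card S}" and "complete F U (prefix_set F S j) = S"
    and "\<forall>k\<in>{1..card S}. complete F U (prefix_set F S k) = S \<longrightarrow> j \<le> k"
    and "j > 1"
  shows "let pi = canon F S ! (j - 1);
             core = prefix_set F S (j - 1);
             parent = complete F U core
         in maximal F parent \<and> prec F parent S \<and> parent \<noteq> S \<and>
            core \<subseteq> parent \<and> pi \<notin> core \<and> insert pi core \<in> F \<and>
            S = complete F U (insert pi core)"
proof -
  have SA: "strongly_accessible F" by fact
  have finU: "finite U" and sub: "F \<subseteq> Pow U" and eF: "{} \<in> F"
    using assms(1) by (auto simp: set_system_def)
  have SF: "S \<in> F" using assms(3) by (simp add: maximal_def)
  have finS: "finite S" using SF sub finU finite_subset by blast
  have SU: "S \<subseteq> U" using SF sub by blast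
  define n where "n = j - 1"
  have jn: "j = Suc n" using assms(8) n_def by simp
  have jS: "j \<le> card S" using assms(5) by simp
  define cS where "cS = canon_seq F S"
  define core where "core = prefix_set F S n"
  have core_eq: "core = set (cS n)"
    unfolding core_def prefix_set_def cS_def using canon_take[OF SA SF finS eF, of n] jS jn by simp
  have propS: "\<And>i. i \<le> card S \<Longrightarrow> length (cS i) = i \<and> distinct (cS i) \<and> set (cS i) \<subseteq> S \<and> set (cS i) \<in> F"
    unfolding cS_def using canon_seq_props[OF SA SF finS eF] by blast
  define pi where "pi = canon F S ! n"
  have pin: "ext F core S \<noteq> {}" "pi = Min (ext F core S)"
    using canon_nth[OF SA SF finS eF, of n] jS jn core_eq cS_def pi_def by auto
  have cSj: "cS j = cS n @ [pi]" using pin core_eq jn by (simp add: cS_def Let_def)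
  have prefj: "prefix_set F S j = insert pi core"
    unfolding prefix_set_def using canon_take[OF SA SF finS eF, of j] jS cSj core_eq cS_def by simp
  have pinot: "pi \<notin> core" using propS[of j] jS cSj core_eq by simp
  have insF: "insert pi core \<in> F" using propS[of j] jS cSj core_eq by simp
  have coreF: "core \<in> F" using propS[of n] jS jn core_eq by simp
  have Sc: "S = complete F U (insert pi core)" using assms(6) prefj by simp
  define P where "P = complete F U core"
  have Pm: "maximal F P" "core \<subseteq> P" using complete_maximal[OF assms(1) SA coreF] P_def by auto
  have PS: "P \<noteq> S"
  proof
    assume "P = S"
    have nr: "n \<in> {1..card S}" using jn jS assms(8) by simp
    have "complete F U (prefix_set F S n) = S" using \<open>P = S\<close> P_def core_def by simp
    then have "j \<le> n" using assms(7) nr by blast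
    then show False using jn by simp
  qed
  have PF: "P \<in> F" using Pm by (simp add: maximal_def)
  have finP: "finite P" using PF sub finU finite_subset by blast
  have piU: "pi \<in> ext F core U"
  proof -
    have "finite (ext F core S)" using finS by (auto simp: ext_def)
    then have "pi \<in> ext F core S" using pin Min_in by metis
    then show ?thesis using SU by (auto simp: ext_def)
  qed
  have finE: "finite (ext F core U)" using finU by (auto simp: ext_def)
  define m where "m = Min (ext F core U)"
  have mE: "m \<in> ext F core U" using piU finE m_def by (metis Min_in empty_iff)
  have mle: "m \<le> pi" using piU finE m_def by simp
  have Pstep: "P = complete F U (insert m core)"
    unfolding P_def complete_def m_def using piU finU by (subst complete_on.simps) auto
  have mpi: "m \<noteq> pi" using Pstep Sc PS by auto
  have mlt: "m < pi" using mle mpi by simp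
  have mP: "m \<in> P" using complete_maximal[OF assms(1) SA, of "insert m core"] mE Pstep
    by (auto simp: ext_def)
  have mEP: "m \<in> ext F core P" using mE mP by (auto simp: ext_def)
  define cP where "cP = canon_seq F P"
  have agree: "\<And>i. (\<forall>i'<i. cP (Suc i') = cS (Suc i')) \<Longrightarrow> cP i = cS i"
  proof -
    fix i assume h: "\<forall>i'<i. cP (Suc i') = cS (Suc i')"
    show "cP i = cS i"
    proof (cases i)
      case 0 then show ?thesis by (simp add: cP_def cS_def)
    next
      case (Suc k) then show ?thesis using h by auto
    qed
  qed
  have exd: "\<exists>i. i \<le> n \<and> cP (Suc i) \<noteq> cS (Suc i)"
  proof (rule ccontr)
    assume "\<not> ?thesis"
    then have all: "\<forall>i\<le>n. cP (Suc i) = cS (Suc i)" by blast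
    have "cP n = cS n" using agree all by auto
    have fE: "finite (ext F core P)" using finP by (auto simp: ext_def)
    have "ext F (set (cP n)) P \<noteq> {}" using mEP \<open>cP n = cS n\<close> core_eq by auto
    then have "cP j = cP n @ [Min (ext F core P)]"
      using jn \<open>cP n = cS n\<close> core_eq by (simp add: cP_def Let_def)
    moreover have "cP j = cS j" using all jn by auto
    ultimately have "Min (ext F core P) = pi" using cSj \<open>cP n = cS n\<close> by simp
    moreover have "Min (ext F core P) \<le> m" using mEP fE by simp
    ultimately show False using mlt by simp
  qed
  obtain i where i: "i \<le> n" "cP (Suc i) \<noteq> cS (Suc i)" "\<forall>i'<i. cP (Suc i') = cS (Suc i')"
  proof -
    from exd obtain i0 where "i0 \<le> n \<and> cP (Suc i0) \<noteq> cS (Suc i0)" by blast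
    then have "\<exists>i. (i \<le> n \<and> cP (Suc i) \<noteq> cS (Suc i)) \<and> (\<forall>i'<i. \<not> (i' \<le> n \<and> cP (Suc i') \<noteq> cS (Suc i')))"
      using exists_least_iff[of "\<lambda>i. i \<le> n \<and> cP (Suc i) \<noteq> cS (Suc i)"] by blast
    then obtain i where "i \<le> n" "cP (Suc i) \<noteq> cS (Suc i)" "\<forall>i'<i. \<not> (i' \<le> n \<and> cP (Suc i') \<noteq> cS (Suc i'))"
      by blast
    then show ?thesis using that by force
  qed
  define L where "L = cS i"
  have LP: "cP i = L" using agree i(3) L_def by blast
  have iS: "i < card S" using i(1) jn jS by simp
  have sN: "ext F (set L) S \<noteq> {}" "canon F S ! i = Min (ext F (set L) S)"
    using canon_nth[OF SA SF finS eF iS] L_def cS_def by auto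
  define s where "s = Min (ext F (set L) S)"
  have sE: "s \<in> ext F (set L) S"
  proof -
    have "finite (ext F (set L) S)" using finS by (auto simp: ext_def)
    then show ?thesis using sN(1) s_def Min_in by metis
  qed
  have cSs: "cS (Suc i) = L @ [s]" using sN(1) L_def s_def by (simp add: cS_def Let_def)
  obtain ys where ys: "cS (i + (n - i)) = cS i @ ys" using canon_seq_ext cS_def by metis
  have Lcore: "set L \<subseteq> core" using ys i(1) core_eq L_def by auto
  have LPs: "set L \<subseteq> P" using Lcore Pm(2) by blast
  have finEP: "finite (ext F (set L) P)" using finP by (auto simp: ext_def)
  have key: "ext F (set L) P \<noteq> {} \<and> Min (ext F (set L) P) < s"
  proof (cases "i < n")
    case True
    obtain zs where "cS (Suc i + (n - Suc i)) = cS (Suc i) @ zs" using canon_seq_ext cS_def by metis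
    moreover have "Suc i + (n - Suc i) = n" using True by simp
    ultimately have "cS n = cS (Suc i) @ zs" by simp
    then have "s \<in> core" using core_eq cSs by simp
    then have sP: "s \<in> ext F (set L) P" using sE Pm(2) by (auto simp: ext_def)
    have le: "Min (ext F (set L) P) \<le> s" using sP finEP by simp
    have "cP (Suc i) = L @ [Min (ext F (set L) P)]" using sP LP by (auto simp: cP_def Let_def)
    then have "Min (ext F (set L) P) \<noteq> s" using i(2) cSs by auto
    then show ?thesis using le sP by auto
  next
    case False
    then have "i = n" using i(1) by simp
    then have "set L = core" using core_eq L_def by simp
    moreover have "s = pi" using \<open>i = n\<close> s_def pin \<open>set L = core\<close> by simp
    ultimately have mm: "m \<in> ext F (set L) P" using mEP by simp
    then have "Min (ext F (set L) P) \<le> m" using finEP by simp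
    then show ?thesis using mm mlt \<open>s = pi\<close> by auto
  qed
  have cardL: "card (set L) = i" using propS[of i] iS L_def by (simp add: distinct_card)
  have "set L \<subset> P" using key LPs by (auto simp: ext_def)
  then have "card (set L) < card P" using finP by (rule psubset_card_mono[rotated])
  then have iP: "i < card P" using cardL by simp
  have tN: "canon F P ! i = Min (ext F (set L) P)"
    using canon_nth[OF SA PF finP eF iP] LP cP_def by auto
  have lenP: "length (canon F P) = card P"
    using canon_seq_props[OF SA PF finP eF, of "card P"] by (simp add: canon_def)
  have lenS: "length (canon F S) = card S"
    using canon_seq_props[OF SA SF finS eF, of "card S"] by (simp add: canon_def)
  have tk: "take i (canon F P) = take i (canon F S)"
    using canon_take[OF SA PF finP eF, of i] canon_take[OF SA SF finS eF, of i] iP iS LP L_def cP_def cS_def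
    by simp
  have prec: "prec F P S"
    unfolding prec_def using PS iP iS lenP lenS tk tN sN key s_def by auto
  have e1: "prefix_set F S (j - 1) = core" using core_def n_def by simp
  have e2: "canon F S ! (j - 1) = pi" using pi_def n_def by simp
  have e3: "complete F U core = P" using P_def by simp
  have all: "maximal F P \<and> prec F P S \<and> P \<noteq> S \<and>
            core \<subseteq> P \<and> pi \<notin> core \<and> insert pi core \<in> F \<and>
            S = complete F U (insert pi core)"
    using Pm prec PS pinot insF Sc by blast
  show ?thesis
    unfolding Let_def e1 e2 e3 by (rule all)
qed

end
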